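(* (i) If $b\neq0$, then for all $0\le k\le n$, $$E_{n,k}(a,b;c_0,c_\infty)=\frac1{b^kk!}\sum_{j=0}^k(-1)^{k-j}\binom kj(bn+c_0+c_\infty)^{\underline{k-j},b}\,(c_0+c_\infty)^{\overline j,b}\,(bj+c_0)^{\underline n,a}.$$ (ii) For all complex $a,b,c_0,c_\infty$ and all $n\ge0$, as polynomials in $x$, $$(c_0+c_\infty)^{\overline n,b}\,(x)^{\underline n,a}=\sum_{k=0}^nE_{n,k}(a,b;c_0,c_\infty)\,(x-c_0)^{\underline k,b}\,(x+c_\infty)^{\overline{n-k},b}.$$
   Context: GKP triangle $\left[\begin{array}{cc|c}\alpha,&\beta&\gamma\\ \alpha',&\beta'&\gamma'\end{array}\right]_{n,k}$: defined by $T_{0,0}=1$, $T_{n,k}=0$ if $n<0$, $k<0$ or $k>n$, and $T_{n+1,k+1}=[\alpha n+\beta(k+1)+\gamma]T_{n,k+1}+[\alpha' n+\beta' k+\gamma']T_{n,k}$ for $n\ge0$, $k\in\mathbb Z$. Generalized Eulerian numbers: $E_{n,k}(a,b;c_0,c_\infty):=\left[\begin{array}{cc|c}-a,&b&c_0\\ a+b,&-b&c_\infty\end{array}\right]_{n,k}$, i.e. $E_{n+1,k+1}=[-an+b(k+1)+c_0]E_{n,k+1}+[(a+b)n-bk+c_\infty]E_{n,k}$. $(x)^{\overline n,b}=\prod_{i=0}^{n-1}(x+ib)$, $(x)^{\underline n,b}=\prod_{i=0}^{n-1}(x-ib)$ (empty product $=1$). *)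

theory Defs
  imports "HOL-Analysis.Analysis" "HOL-Computational_Algebra.Polynomial"
begin

fun gkp :: "complex \<Rightarrow> complex \<Rightarrow> complex \<Rightarrow> complex \<Rightarrow> complex \<Rightarrow> complex
            \<Rightarrow> nat \<Rightarrow> int \<Rightarrow> complex" where
  "gkp al be ga al' be' ga' 0 k = (if k = 0 then 1 else 0)"
| "gkp al be ga al' be' ga' (Suc n) k =
     (if k < 0 \<or> k > int (Suc n) then 0 else
      (al * of_nat n + be * of_int k + ga) * gkp al be ga al' be' ga' n k
      + (al' * of_nat n + be' * of_int (k - 1) + ga') * gkp al be ga al' be' ga' n (k - 1))"

definition genEuler :: "complex \<Rightarrow> complex \<Rightarrow> complex \<Rightarrow> complex \<Rightarrow> nat \<Rightarrow> int \<Rightarrow> complex" where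
  "genEuler a b c0 cinf n k = gkp (-a) b c0 (a + b) (-b) cinf n k"

definition rise :: "complex \<Rightarrow> nat \<Rightarrow> complex \<Rightarrow> complex" where
  "rise x n b = (\<Prod>i<n. x + of_nat i * b)"

definition fall :: "complex \<Rightarrow> nat \<Rightarrow> complex \<Rightarrow> complex" where
  "fall x n b = (\<Prod>i<n. x - of_nat i * b)"

definition rise_poly :: "complex \<Rightarrow> nat \<Rightarrow> complex \<Rightarrow> complex poly" where
  "rise_poly c n b = (\<Prod>i<n. [: c + of_nat i * b, 1 :])"

definition fall_poly :: "complex \<Rightarrow> nat \<Rightarrow> complex \<Rightarrow> complex poly" where
  "fall_poly c n b = (\<Prod>i<n. [: c - of_nat i * b, 1 :])"

end

theory Submission
  imports Defs
begin

lemma gkp_out: "k < 0 \<or> k > int n \<Longrightarrow> gkp al be ga al' be' ga' n k = 0"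
  by (induction n arbitrary: k) auto

lemma gkp_Suc_all:
  "gkp al be ga al' be' ga' (Suc n) k =
     (al * of_nat n + be * of_int k + ga) * gkp al be ga al' be' ga' n k
   + (al' * of_nat n + be' * of_int (k - 1) + ga') * gkp al be ga al' be' ga' n (k - 1)"
proof (cases "k < 0 \<or> k > int (Suc n)")
  case True
  then have "gkp al be ga al' be' ga' n k = 0" "gkp al be ga al' be' ga' n (k-1) = 0"
    by (auto intro!: gkp_out)
  with True show ?thesis by simp
next
  case False
  then show ?thesis by simp
qed

lemma E_Suc0: "genEuler a b c0 cinf (Suc n) 0 = (c0 - a * of_nat n) * genEuler a b c0 cinf n 0"
  unfolding genEuler_def using gkp_out[of "-1" n "-a" b c0 "a+b" "-b" cinf]
  by (simp only: gkp_Suc_all) (simp add: algebra_simps)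

lemma E_SucSuc: "genEuler a b c0 cinf (Suc n) (int (Suc m)) =
   (c0 + b * (of_nat m + 1) - a * of_nat n) * genEuler a b c0 cinf n (int (Suc m))
 + (cinf + a * of_nat n + b * (of_nat n - of_nat m)) * genEuler a b c0 cinf n (int m)"
  unfolding genEuler_def
  by (simp only: gkp_Suc_all) (simp add: algebra_simps)

lemma fall_Suc: "fall x (Suc m) b = fall x m b * (x - of_nat m * b)"
  by (simp add: fall_def)

lemma fall_Suc_shift: "fall x (Suc m) b = x * fall (x - b) m b"
  unfolding fall_def prod.lessThan_Suc_shift by (simp add: algebra_simps)

lemma fall_neg: "fall x m b = (-1)^m * rise (-x) m b"
proof -
  have "(-1)^m * rise (-x) m b = (\<Prod>i<m. (-1) * (- x + of_nat i * b))"
    unfolding rise_def by (simp only: prod.distrib prod_constant card_lessThan)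
  also have "\<dots> = fall x m b" unfolding fall_def by (intro prod.cong) (auto simp: algebra_simps)
  finally show ?thesis ..
qed

lemma uu_aux: "(u::complex) * u = 1 \<Longrightarrow> u * C * (u * r) * R * 1 = C * R * r"
proof -
  assume h: "u * u = 1"
  have "u * C * (u * r) * R * 1 = (u*u) * (C * R * r)" by (simp add: mult_ac)
  then show ?thesis using h by simp
qed

lemma rise_poch: "b \<noteq> 0 \<Longrightarrow> rise x k b = b^k * pochhammer (x/b) k"
proof -
  assume b: "b \<noteq> 0"
  have "b^k * pochhammer (x/b) k = (\<Prod>i<k. b) * (\<Prod>i<k. x/b + of_nat i)"
    by (simp add: pochhammer_prod atLeast0LessThan)
  also have "\<dots> = (\<Prod>i<k. b * (x/b + of_nat i))" by (simp add: prod.distrib)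
  also have "\<dots> = rise x k b" unfolding rise_def using b by (intro prod.cong) (auto simp: field_simps)
  finally show ?thesis ..
qed

lemma rise_vandermonde: "b \<noteq> 0 \<Longrightarrow>
  rise (x + y) k b = (\<Sum>j\<le>k. of_nat (k choose j) * rise x j b * rise y (k - j) b)"
proof -
  assume b: "b \<noteq> 0"
  have "rise (x + y) k b = b^k * (\<Sum>j\<le>k. of_nat (k choose j) * pochhammer (x/b) j * pochhammer (y/b) (k - j))"
    using b by (simp add: rise_poch pochhammer_binomial_sum[symmetric] add_divide_distrib)
  also have "\<dots> = (\<Sum>j\<le>k. of_nat (k choose j) * rise x j b * rise y (k - j) b)"
    unfolding sum_distrib_left
  proof (intro sum.cong refl)
    fix j assume "j \<in> {..k}"
    then have "b^k = b^j * b^(k-j)" by (simp add: power_add[symmetric])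
    then show "b ^ k * (of_nat (k choose j) * pochhammer (x / b) j * pochhammer (y / b) (k - j)) =
         of_nat (k choose j) * rise x j b * rise y (k - j) b"
      using b by (simp add: rise_poch)
  qed
  finally show ?thesis .
qed

definition S :: "complex \<Rightarrow> complex \<Rightarrow> complex \<Rightarrow> complex \<Rightarrow> nat \<Rightarrow> nat \<Rightarrow> complex" where
  "S a b c0 cinf n k = (\<Sum>j\<le>k. (-1) ^ (k - j) * of_nat (k choose j)
                   * fall (b * of_nat n + c0 + cinf) (k - j) b
                   * rise (c0 + cinf) j b
                   * fall (b * of_nat j + c0) n a)"

lemma S0: assumes "b \<noteq> 0" "k > 0" shows "S a b c0 cinf 0 k = 0"
proof -
  have "S a b c0 cinf 0 k = (\<Sum>j\<le>k. of_nat (k choose j) * rise (c0 + cinf) j b * rise (-(c0+cinf)) (k - j) b)"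
    unfolding S_def
  proof (intro sum.cong refl)
    fix j
    have pw: "(-1::complex) ^ (k - j) * (-1) ^ (k - j) = 1" by (simp add: power_mult_distrib[symmetric])
    have f: "fall (b * of_nat 0 + c0 + cinf) (k-j) b = (-1)^(k-j) * rise (-(c0+cinf)) (k-j) b"
      by (simp add: fall_neg)
    have g: "fall (b * of_nat j + c0) 0 a = 1" by (simp add: fall_def)
    show "(- 1) ^ (k - j) * of_nat (k choose j) * fall (b * of_nat 0 + c0 + cinf) (k - j) b *
         rise (c0 + cinf) j b * fall (b * of_nat j + c0) 0 a =
         of_nat (k choose j) * rise (c0 + cinf) j b * rise (- (c0 + cinf)) (k - j) b"
      unfolding f g by (rule uu_aux[OF pw])
  qed
  also have "\<dots> = rise 0 k b" using rise_vandermonde[OF assms(1), of "c0+cinf" "-(c0+cinf)" k] by simp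
  also have "\<dots> = 0" unfolding rise_def using assms(2) by (intro prod_zero) auto
  finally show ?thesis .
qed

lemma S_Suc0: "S a b c0 cinf (Suc n) 0 = (c0 - a * of_nat n) * S a b c0 cinf n 0"
  unfolding S_def by (simp add: fall_Suc fall_def[of _ 0] rise_def algebra_simps)

lemma term_id:
  fixes a b cc dd P Ck Cm Fm R F :: complex and n m j :: nat
  assumes "j \<le> m" "of_nat (Suc m) * Cm = (of_nat m + 1 - of_nat j) * Ck"
  shows "(-P) * Ck * ((b * of_nat(Suc n) + cc + dd) * Fm) * R * (F * (b * of_nat j + cc - of_nat n * a))
   = (cc + b * (of_nat m+1) - a * of_nat n) * ((-P) * Ck * (Fm * ((b * of_nat n + cc+dd) - of_nat (m - j)*b)) * R * F)
   + (dd + a * of_nat n + b * (of_nat n - of_nat m)) * b * of_nat (Suc m) * (P * Cm * Fm * R * F)"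
proof -
  have Cm: "Cm = (of_nat m + 1 - of_nat j) * Ck / of_nat (Suc m)"
    using assms(2) by (simp add: field_simps del: of_nat_Suc)
  have mj: "of_nat (m - j) = (of_nat m - of_nat j :: complex)" using assms(1) by (simp add: of_nat_diff)
  have nz: "(1 + of_nat m :: complex) \<noteq> 0" "(of_nat m + 1 :: complex) \<noteq> 0"
    by (metis of_nat_Suc of_nat_eq_0_iff nat.distinct(1) add.commute)+
  show ?thesis unfolding Cm mj using nz by (simp add: field_simps)
qed

lemma S_SucSuc: "S a b c0 cinf (Suc n) (Suc m) =
   (c0 + b * (of_nat m + 1) - a * of_nat n) * S a b c0 cinf n (Suc m)
 + (cinf + a * of_nat n + b * (of_nat n - of_nat m)) * b * of_nat (Suc m) * S a b c0 cinf n m"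
proof -
  let ?c = "c0 + b * (of_nat m + 1) - a * of_nat n"
  let ?d = "(cinf + a * of_nat n + b * (of_nat n - of_nat m)) * b * of_nat (Suc m)"
  define t1 where "t1 j = (-1) ^ (Suc m - j) * of_nat (Suc m choose j)
                   * fall (b * of_nat (Suc n) + c0 + cinf) (Suc m - j) b
                   * rise (c0 + cinf) j b * fall (b * of_nat j + c0) (Suc n) a" for j
  define t2 where "t2 j = (-1) ^ (Suc m - j) * of_nat (Suc m choose j)
                   * fall (b * of_nat n + c0 + cinf) (Suc m - j) b
                   * rise (c0 + cinf) j b * fall (b * of_nat j + c0) n a" for j
  define t3 where "t3 j = (-1) ^ (m - j) * of_nat (m choose j)
                   * fall (b * of_nat n + c0 + cinf) (m - j) b
                   * rise (c0 + cinf) j b * fall (b * of_nat j + c0) n a" for j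
  have e1: "S a b c0 cinf (Suc n) (Suc m) = (\<Sum>j\<le>m. t1 j) + t1 (Suc m)"
    unfolding S_def t1_def by simp
  have e2: "S a b c0 cinf n (Suc m) = (\<Sum>j\<le>m. t2 j) + t2 (Suc m)"
    unfolding S_def t2_def by simp
  have e3: "S a b c0 cinf n m = (\<Sum>j\<le>m. t3 j)"
    unfolding S_def t3_def by simp
  have last: "t1 (Suc m) = ?c * t2 (Suc m)"
    unfolding t1_def t2_def by (simp add: fall_Suc fall_def[of _ 0] algebra_simps)
  have mid: "t1 j = ?c * t2 j + ?d * t3 j" if "j \<le> m" for j
  proof -
    have sj: "Suc m - j = Suc (m - j)" using that by simp
    have bin: "of_nat (Suc m) * of_nat (m choose j) = (of_nat m + 1 - of_nat j) * (of_nat (Suc m choose j) :: complex)"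
    proof -
      have "(Suc m - j) * (Suc m choose j) = Suc m * (m choose j)"
        using binomial_absorb_comp[of "Suc m" j] by simp
      then have "of_nat (Suc m - j) * (of_nat (Suc m choose j)::complex) = of_nat (Suc m) * of_nat (m choose j)"
        by (metis of_nat_mult)
      then show ?thesis using that by (simp add: of_nat_diff) (metis add.commute)
    qed
    have sh: "fall (b * of_nat (Suc n) + c0 + cinf) (Suc (m - j)) b
       = (b * of_nat (Suc n) + c0 + cinf) * fall (b * of_nat n + c0 + cinf) (m - j) b"
      by (simp only: fall_Suc_shift) (simp add: algebra_simps)
    show ?thesis
      unfolding t1_def t2_def t3_def sj unfolding sh unfolding fall_Suc power_Suc
      using term_id[OF that bin, where a=a and b=b and cc=c0 and dd=cinf and n=n and P="(-1)^(m-j)"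
        and Fm="fall (b * of_nat n + c0 + cinf) (m - j) b" and R="rise (c0 + cinf) j b"
        and F="fall (b * of_nat j + c0) n a"] by (simp add: mult_ac)
  qed
  have "S a b c0 cinf (Suc n) (Suc m) = (\<Sum>j\<le>m. ?c * t2 j + ?d * t3 j) + ?c * t2 (Suc m)"
    unfolding e1 last using mid by simp
  also have "\<dots> = ?c * (\<Sum>j\<le>m. t2 j) + ?d * (\<Sum>j\<le>m. t3 j) + ?c * t2 (Suc m)"
    by (simp only: sum.distrib sum_distrib_left)
  also have "\<dots> = ?c * S a b c0 cinf n (Suc m) + ?d * S a b c0 cinf n m"
    unfolding e2 e3 distrib_left by (simp only: add_ac)
  finally show ?thesis .
qed

lemma aux_div: "(D::complex) \<noteq> 0 \<Longrightarrow> x = y / D \<Longrightarrow> y = x * D" by simp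

lemma smult_mult_aux: "smult (r * x) (L * q) = smult r L * smult x (q :: complex poly)"
  by (simp add: mult_smult_left mult_smult_right smult_smult mult.commute)

lemma poly_aux: "smult E (P*Q) * (smult A X + smult B Y) = smult (A*E) (P*(Q*X)) + smult (B*E) ((P*Y)*(Q::complex poly))"
  by (simp add: algebra_simps smult_smult mult_smult_left mult_smult_right smult_add_right)

lemma div_aux: "(b::complex) \<noteq> 0 \<Longrightarrow> s \<noteq> 0 \<Longrightarrow> D \<noteq> 0 \<Longrightarrow>
  c*E1 + d*E0 = (c * (E1 * (b * s * D)) + d * b * s * (E0 * D)) / (b * s * D)"
  by (simp add: field_simps)

lemma E_eq_S: assumes b: "b \<noteq> 0"
  shows "genEuler a b c0 cinf n (int k) = S a b c0 cinf n k / (b ^ k * of_nat (fact k))"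
proof (induction n arbitrary: k)
  case 0
  show ?case
  proof (cases k)
    case 0
    then show ?thesis by (simp add: genEuler_def S_def fall_def rise_def)
  next
    case (Suc m)
    then show ?thesis using S0[OF b, of k a c0 cinf] by (simp add: genEuler_def)
  qed
next
  case (Suc n)
  show ?case
  proof (cases k)
    case 0
    then show ?thesis using Suc.IH[of 0] by (simp add: E_Suc0 S_Suc0)
  next
    case (Suc m)
    have f: "of_nat (fact (Suc m)) = (of_nat (Suc m) :: complex) * of_nat (fact m)"
      by (simp add: fact_Suc algebra_simps)
    have nz: "(of_nat (fact m) :: complex) \<noteq> 0" "(1 + of_nat m :: complex) \<noteq> 0"
      by (metis fact_nonzero of_nat_eq_0_iff, metis of_nat_Suc of_nat_eq_0_iff nat.distinct(1))
    have D: "b ^ Suc m * of_nat (fact (Suc m)) \<noteq> (0::complex)" "b ^ m * of_nat (fact m) \<noteq> (0::complex)"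
      using b by (metis fact_nonzero mult_eq_0_iff of_nat_eq_0_iff power_eq_0_iff)+
    have h1: "S a b c0 cinf n (Suc m) = genEuler a b c0 cinf n (int (Suc m)) * (b ^ Suc m * of_nat (fact (Suc m)))"
      by (rule aux_div[OF D(1) Suc.IH])
    have h2: "S a b c0 cinf n m = genEuler a b c0 cinf n (int m) * (b ^ m * of_nat (fact m))"
      by (rule aux_div[OF D(2) Suc.IH])
    have D1: "b ^ Suc m * of_nat (fact (Suc m)) = b * of_nat (Suc m) * (b ^ m * of_nat (fact m))"
      unfolding f by (simp only: power_Suc mult_ac)
    have sn: "(of_nat (Suc m) :: complex) \<noteq> 0" by (metis of_nat_eq_0_iff nat.distinct(1))
    show ?thesis unfolding Suc E_SucSuc S_SucSuc h1 h2 unfolding D1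
      by (rule div_aux[OF b sn D(2)])
  qed
qed

lemma fall_poly_Suc: "fall_poly c (Suc k) b = fall_poly c k b * [: c - of_nat k * b, 1 :]"
  by (simp add: fall_poly_def)

lemma rise_poly_Suc: "rise_poly c (Suc k) b = rise_poly c k b * [: c + of_nat k * b, 1 :]"
  by (simp add: rise_poly_def)

lemma part2: "smult (rise (c0 + cinf) n b) (fall_poly 0 n a) =
   (\<Sum>k\<le>n. smult (genEuler a b c0 cinf n (int k)) (fall_poly (- c0) k b * rise_poly cinf (n - k) b))"
proof (induction n)
  case 0
  then show ?case by (simp add: fall_poly_def rise_poly_def rise_def genEuler_def)
next
  case (Suc n)
  define E where "E k = genEuler a b c0 cinf n (int k)" for k
  define P where "P k = fall_poly (- c0) k b" for k
  define Q where "Q k = rise_poly cinf k b" for k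
  define A where "A k = c0 + b * of_nat k - a * of_nat n" for k
  define B where "B k = cinf + a * of_nat n + b * (of_nat n - of_nat k)" for k
  define f where "f k = smult (A k * E k) (P k * Q (Suc n - k))" for k
  define g where "g k = smult (B k * E k) (P (Suc k) * Q (n - k))" for k
  have ER0: "genEuler a b c0 cinf (Suc n) 0 = A 0 * E 0"
    unfolding A_def E_def by (simp add: E_Suc0)
  have ERS: "genEuler a b c0 cinf (Suc n) (int (Suc m)) = A (Suc m) * E (Suc m) + B m * E m" for m
    unfolding A_def B_def E_def E_SucSuc by simp
  have En: "E (Suc n) = 0" unfolding E_def genEuler_def by (rule gkp_out) simp
  have lin: "smult (c0 + cinf + of_nat n * b) [:0 - of_nat n * a, 1:] =
      smult (A k) [:cinf + of_nat (n - k) * b, 1:] + smult (B k) [:- c0 - of_nat k * b, 1:]"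
    if "k \<le> n" for k
    using that by (simp add: A_def B_def of_nat_diff algebra_simps)
  have "smult (rise (c0 + cinf) (Suc n) b) (fall_poly 0 (Suc n) a)
      = smult (rise (c0 + cinf) n b) (fall_poly 0 n a) * smult (c0 + cinf + of_nat n * b) [:0 - of_nat n * a, 1:]"
  proof -
    have r: "rise (c0 + cinf) (Suc n) b = rise (c0 + cinf) n b * (c0 + cinf + of_nat n * b)"
      by (simp add: rise_def)
    show ?thesis by (simp only: r fall_poly_Suc smult_mult_aux)
  qed
  also have "\<dots> = (\<Sum>k\<le>n. smult (E k) (P k * Q (n - k)) * smult (c0 + cinf + of_nat n * b) [:0 - of_nat n * a, 1:])"
    unfolding Suc.IH sum_distrib_right E_def P_def Q_def ..
  also have "\<dots> = (\<Sum>k\<le>n. f k + g k)"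
  proof (intro sum.cong refl)
    fix k assume "k \<in> {..n}"
    then have k: "k \<le> n" by simp
    have sk: "Suc n - k = Suc (n - k)" using k by simp
    show "smult (E k) (P k * Q (n - k)) * smult (c0 + cinf + of_nat n * b) [:0 - of_nat n * a, 1:] = f k + g k"
      unfolding lin[OF k] f_def g_def sk P_def Q_def fall_poly_Suc rise_poly_Suc
      by (rule poly_aux)
  qed
  also have "\<dots> = (\<Sum>k\<le>n. f k) + (\<Sum>k\<le>n. g k)" by (simp add: sum.distrib)
  also have "(\<Sum>k\<le>n. f k) = (\<Sum>k\<le>Suc n. f k)" by (simp add: f_def En)
  also have "\<dots> = f 0 + (\<Sum>k\<le>n. f (Suc k))" by (rule sum.atMost_Suc_shift)
  finally have L: "smult (rise (c0 + cinf) (Suc n) b) (fall_poly 0 (Suc n) a) =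
     f 0 + (\<Sum>k\<le>n. f (Suc k)) + (\<Sum>k\<le>n. g k)" .
  have "(\<Sum>k\<le>Suc n. smult (genEuler a b c0 cinf (Suc n) (int k)) (fall_poly (- c0) k b * rise_poly cinf (Suc n - k) b))
     = smult (genEuler a b c0 cinf (Suc n) 0) (P 0 * Q (Suc n)) +
       (\<Sum>k\<le>n. smult (genEuler a b c0 cinf (Suc n) (int (Suc k))) (P (Suc k) * Q (Suc n - Suc k)))"
    unfolding P_def Q_def by (subst sum.atMost_Suc_shift) simp
  also have "\<dots> = f 0 + (\<Sum>k\<le>n. f (Suc k) + g k)"
    unfolding ER0 ERS f_def g_def by (simp add: smult_add_left)
  also have "\<dots> = f 0 + (\<Sum>k\<le>n. f (Suc k)) + (\<Sum>k\<le>n. g k)" by (simp add: sum.distrib add_ac)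
  finally show ?case using L by simp
qed

theorem mainTheorem10:
  fixes a b c0 cinf :: complex
  shows "(b \<noteq> 0 \<longrightarrow> (\<forall>n k. k \<le> n \<longrightarrow>
            genEuler a b c0 cinf n (int k) =
              (1 / (b ^ k * of_nat (fact k))) *
              (\<Sum>j\<le>k. (-1) ^ (k - j) * of_nat (k choose j)
                   * fall (b * of_nat n + c0 + cinf) (k - j) b
                   * rise (c0 + cinf) j b
                   * fall (b * of_nat j + c0) n a)))
       \<and> (\<forall>n. smult (rise (c0 + cinf) n b) (fall_poly 0 n a) =
              (\<Sum>k\<le>n. smult (genEuler a b c0 cinf n (int k))
                         (fall_poly (- c0) k b * rise_poly cinf (n - k) b)))"
  using E_eq_S part2 by (simp add: S_def)

end
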